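(* In the Byblos protocol described in the context, if a transaction $T$ is in $\mathit{confirmed}[t]$ at one correct server and in $\mathit{confirmed}[t']$ at another correct server, then $t = t'$.
   Context: Byblos protocol. There are $n=4f+1$ servers, at most $f$ of which are Byzantine; the rest are correct. Clients are not Byzantine (they may crash). Messages between correct parties are eventually delivered, channels are FIFO, senders are authenticated, and every client message (including when forwarded by a server) is signed by the client and cannot be forged. Each correct server keeps an integer $\mathit{clock}$ (initially $0$), sets $\mathit{proposed}[s]$ of pairs $(T,k)$ for each server $s$, and maps $\mathit{confirmed}[t]$, $\mathit{pending}[t]$ from integer timestamps to sets of transactions (initially empty). Client with transaction $T$: broadcasts $\mathrm{Propose}(T)$ to all servers; waits for $\mathrm{ProposeAck}(T,\cdot)$ from at least $n-f$ servers; letting $\mathit{timestamp}[s]$ be the value received from server $s$ ($0$ if none), sets $\hat t$ to $1$ plus the $(f+1)$-st largest value of $\mathit{timestamp}[\cdot]$; then broadcasts $\mathrm{Confirm}(T,\hat t)$ once. Correct server: on $\mathrm{Propose}(T)$ from a client, adds $(T,\mathit{clock})$ to $\mathit{proposed}[\mathit{self}]$, sends $\mathrm{Proposed}(T,\mathit{clock})$ to all servers and $\mathrm{ProposeAck}(T,\mathit{clock})$ to the client; on $\mathrm{Proposed}(T,k)$ from server $s$, adds $(T,k)$ to $\mathit{proposed}[s]$; on $\mathrm{Confirm}(T,\hat t)$ received from a client or forwarded by a server, sets $\mathit{clock}:=\max(\mathit{clock},\hat t)$, adds $T$ to $\mathit{confirmed}[\hat t]$, and forwards $\mathrm{Confirm}(T,\hat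 t)$ to all servers if not previously done. *)

theory Defs
  imports Main
begin

text \<open>Each transaction T is submitted by its own (non-Byzantine, possibly crashing)
  client, modelled as the party Client T.  Channels are FIFO queues between
  authenticated parties.  Client-signed messages (Propose, Confirm) can only be
  sent by a Byzantine server if the client has actually produced them
  (unforgeability).\<close>

datatype 'tx msg =
    Propose 'tx
  | ProposeAck 'tx int
  | Proposed 'tx int
  | Confirm 'tx int

datatype 'tx party = Client 'tx | Server nat

datatype cstate = Idle | Waiting "nat \<Rightarrow> int option" | Done

record 'tx sstate =
  clock :: int
  proposed :: "nat \<Rightarrow> ('tx \<times> int) set"
  confirmed :: "int \<Rightarrow> 'tx set"
  pending :: "int \<Rightarrow> 'tx set"
  forwarded :: "('tx \<times> int) set"

record 'tx gstate =
  sst :: "nat \<Rightarrow> 'tx sstate"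
  cst :: "'tx \<Rightarrow> cstate"
  chan :: "'tx party \<Rightarrow> 'tx party \<Rightarrow> 'tx msg list"
  sigs :: "'tx msg set"

definition sstate0 :: "'tx sstate" where
  "sstate0 = \<lparr>clock = 0, proposed = (\<lambda>_. {}), confirmed = (\<lambda>_. {}),
              pending = (\<lambda>_. {}), forwarded = {}\<rparr>"

definition gstate0 :: "'tx gstate" where
  "gstate0 = \<lparr>sst = (\<lambda>_. sstate0), cst = (\<lambda>_. Idle), chan = (\<lambda>_ _. []), sigs = {}\<rparr>"

definition send :: "'tx party \<Rightarrow> 'tx party \<Rightarrow> 'tx msg
    \<Rightarrow> ('tx party \<Rightarrow> 'tx party \<Rightarrow> 'tx msg list) \<Rightarrow> ('tx party \<Rightarrow> 'tx party \<Rightarrow> 'tx msg list)" where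
  "send p q m ch = ch(p := (ch p)(q := ch p q @ [m]))"

definition bcast :: "nat \<Rightarrow> 'tx party \<Rightarrow> 'tx msg
    \<Rightarrow> ('tx party \<Rightarrow> 'tx party \<Rightarrow> 'tx msg list) \<Rightarrow> ('tx party \<Rightarrow> 'tx party \<Rightarrow> 'tx msg list)" where
  "bcast n p m ch = (\<lambda>a b. if a = p \<and> (\<exists>s<n. b = Server s) then ch a b @ [m] else ch a b)"

definition deq :: "'tx party \<Rightarrow> 'tx party
    \<Rightarrow> ('tx party \<Rightarrow> 'tx party \<Rightarrow> 'tx msg list) \<Rightarrow> ('tx party \<Rightarrow> 'tx party \<Rightarrow> 'tx msg list)" where
  "deq p q ch = ch(p := (ch p)(q := tl (ch p q)))"

text \<open>The client's value: 1 plus the (f+1)-st largest of timestamp[s], s < n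
  (timestamp[s] = 0 if no ack from s).\<close>
definition client_ts :: "nat \<Rightarrow> nat \<Rightarrow> (nat \<Rightarrow> int option) \<Rightarrow> int" where
  "client_ts n f ts =
     rev (sort (map (\<lambda>s. case ts s of None \<Rightarrow> 0 | Some k \<Rightarrow> k) [0..<n])) ! f + 1"

definition byz_ok :: "'tx msg set \<Rightarrow> 'tx msg \<Rightarrow> bool" where
  "byz_ok S m = (case m of Propose T \<Rightarrow> m \<in> S | Confirm T t \<Rightarrow> m \<in> S | _ \<Rightarrow> True)"

inductive reach :: "nat \<Rightarrow> nat \<Rightarrow> nat set \<Rightarrow> 'tx gstate \<Rightarrow> bool"
  for n :: nat and f :: nat and Byz :: "nat set" where
  init: "reach n f Byz gstate0"
| client_propose:
    "\<lbrakk>reach n f Byz g; cst g T = Idle\<rbrakk> \<Longrightarrow>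
     reach n f Byz (g\<lparr>cst := (cst g)(T := Waiting (\<lambda>_. None)),
                    chan := bcast n (Client T) (Propose T) (chan g),
                    sigs := insert (Propose T) (sigs g)\<rparr>)"
| client_recv:
    "\<lbrakk>reach n f Byz g; chan g (Server s) (Client T) = m # rest\<rbrakk> \<Longrightarrow>
     reach n f Byz (g\<lparr>cst := (case (cst g T, m) of
                        (Waiting ts, ProposeAck T' k) \<Rightarrow>
                           if T' = T \<and> ts s = None
                           then (cst g)(T := Waiting (ts(s := Some k))) else cst g
                      | _ \<Rightarrow> cst g),
                    chan := deq (Server s) (Client T) (chan g)\<rparr>)"
| client_confirm:
    "\<lbrakk>reach n f Byz g; cst g T = Waiting ts;
      card {s. s < n \<and> ts s \<noteq> None} \<ge> n - f\<rbrakk> \<Longrightarrow>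
     reach n f Byz (g\<lparr>cst := (cst g)(T := Done),
                    chan := bcast n (Client T) (Confirm T (client_ts n f ts)) (chan g),
                    sigs := insert (Confirm T (client_ts n f ts)) (sigs g)\<rparr>)"
| server_propose:
    "\<lbrakk>reach n f Byz g; s < n; s \<notin> Byz; chan g (Client c) (Server s) = Propose T # rest;
      st = sst g s\<rbrakk> \<Longrightarrow>
     reach n f Byz (g\<lparr>sst := (sst g)(s := st\<lparr>proposed := (proposed st)(s :=
                              insert (T, clock st) (proposed st s))\<rparr>),
                    chan := send (Server s) (Client c) (ProposeAck T (clock st))
                              (bcast n (Server s) (Proposed T (clock st))
                                (deq (Client c) (Server s) (chan g)))\<rparr>)"
| server_proposed:
    "\<lbrakk>reach n f Byz g; s < n; s \<notin> Byz; chan g (Server r) (Server s) = Proposed T k # rest;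
      st = sst g s\<rbrakk> \<Longrightarrow>
     reach n f Byz (g\<lparr>sst := (sst g)(s := st\<lparr>proposed := (proposed st)(r :=
                              insert (T, k) (proposed st r))\<rparr>),
                    chan := deq (Server r) (Server s) (chan g)\<rparr>)"
| server_confirm:
    "\<lbrakk>reach n f Byz g; s < n; s \<notin> Byz; chan g p (Server s) = Confirm T t # rest;
      st = sst g s\<rbrakk> \<Longrightarrow>
     reach n f Byz (g\<lparr>sst := (sst g)(s := st\<lparr>clock := max (clock st) t,
                              confirmed := (confirmed st)(t := insert T (confirmed st t)),
                              forwarded := insert (T, t) (forwarded st)\<rparr>),
                    chan := (if (T, t) \<in> forwarded st then deq p (Server s) (chan g)
                             else bcast n (Server s) (Confirm T t) (deq p (Server s) (chan g)))\<rparr>)"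
| server_ignore:
    "\<lbrakk>reach n f Byz g; s < n; s \<notin> Byz; chan g p (Server s) = m # rest;
      \<not> (\<exists>c T. p = Client c \<and> m = Propose T);
      \<not> (\<exists>r T k. p = Server r \<and> m = Proposed T k);
      \<not> (\<exists>T t. m = Confirm T t)\<rbrakk> \<Longrightarrow>
     reach n f Byz (g\<lparr>chan := deq p (Server s) (chan g)\<rparr>)"
| byz_send:
    "\<lbrakk>reach n f Byz g; b \<in> Byz; byz_ok (sigs g) m\<rbrakk> \<Longrightarrow>
     reach n f Byz (g\<lparr>chan := send (Server b) q m (chan g)\<rparr>)"
| byz_recv:
    "\<lbrakk>reach n f Byz g; b \<in> Byz; chan g p (Server b) = m # rest\<rbrakk> \<Longrightarrow>
     reach n f Byz (g\<lparr>chan := deq p (Server b) (chan g)\<rparr>)"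

end

theory Submission
  imports Defs
begin

lemma deq_mem: "x \<in> set (deq p q ch a b) \<Longrightarrow> x \<in> set (ch a b)"
  by (cases "ch p q") (auto simp: deq_def split: if_splits)

lemma bcast_mem: "x \<in> set (bcast n p m ch a b) \<Longrightarrow> x = m \<or> x \<in> set (ch a b)"
  by (auto simp: bcast_def split: if_splits)

lemma send_mem: "x \<in> set (send p q m ch a b) \<Longrightarrow> x = m \<or> x \<in> set (ch a b)"
  by (auto simp: send_def split: if_splits)

definition inv :: "'tx gstate \<Rightarrow> bool" where
  "inv g = ((\<forall>T t. Confirm T t \<in> sigs g \<longrightarrow> cst g T = Done) \<and>
     (\<forall>T t t'. Confirm T t \<in> sigs g \<longrightarrow> Confirm T t' \<in> sigs g \<longrightarrow> t = t') \<and>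
     (\<forall>p q T t. Confirm T t \<in> set (chan g p q) \<longrightarrow> Confirm T t \<in> sigs g) \<and>
     (\<forall>s T t. T \<in> confirmed (sst g s) t \<longrightarrow> Confirm T t \<in> sigs g))"

lemma inv_reach: "reach n f Byz g \<Longrightarrow> inv g"
proof (induction rule: reach.induct)
  case init
  then show ?case by (simp add: inv_def gstate0_def sstate0_def)
next
  case (client_propose g T)
  then show ?case
    unfolding inv_def by (auto dest!: bcast_mem)
next
  case (client_recv g s T m rest)
  show ?case using client_recv.IH unfolding inv_def
    by (auto dest!: deq_mem split: cstate.splits msg.splits)
next
  case (client_confirm g T ts)
  show ?case using client_confirm unfolding inv_def
    by (auto dest!: bcast_mem)
next
  case (server_propose g s c T rest st)
  show ?case using server_propose unfolding inv_def
    by (auto dest!: bcast_mem send_mem deq_mem split: if_splits)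
next
  case (server_proposed g s r T k rest st)
  show ?case using server_proposed unfolding inv_def
    by (auto dest!: deq_mem split: if_splits)
next
  case (server_confirm g s p T t rest st)
  have inS: "Confirm T t \<in> sigs g" using server_confirm unfolding inv_def
    by (metis list.set_intros(1))
  show ?case using server_confirm inS unfolding inv_def
    by (auto dest!: bcast_mem deq_mem split: if_splits)
next
  case (server_ignore g s p m rest)
  show ?case using server_ignore unfolding inv_def
    by (auto dest!: deq_mem)
next
  case (byz_send g b m q)
  show ?case using byz_send unfolding inv_def
    by (auto dest!: send_mem simp: byz_ok_def)
next
  case (byz_recv g b p m rest)
  show ?case using byz_recv unfolding inv_def
    by (auto dest!: deq_mem)
qed

theorem lemma1:
  fixes n f :: nat and Byz :: "nat set" and g :: "'tx gstate"
    and s1 s2 :: nat and T :: 'tx and t t' :: int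
  assumes "n = 4 * f + 1"
    and "Byz \<subseteq> {..<n}" and "card Byz \<le> f"
    and "reach n f Byz g"
    and "s1 < n" and "s1 \<notin> Byz" and "s2 < n" and "s2 \<notin> Byz"
    and "T \<in> confirmed (sst g s1) t"
    and "T \<in> confirmed (sst g s2) t'"
  shows "t = t'"
  using inv_reach[OF assms(4)] assms(9,10) unfolding inv_def by blast

end
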